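(* Let $0<q\le1\le p\le2$, let $A\in\mathbb{R}^{m\times n}$, let $\bar{x}\in\mathbb{R}^n$ have exactly $S\ge1$ nonzero groups, set $b:=A\bar{x}$, and suppose the $(p,q)$-GREC$(S,S)$ holds. Let $K$ be the smallest integer with $2^{K-1}q\ge1$ and let $\lambda>0$. Then for every $x^*\in{\rm lev}_F(\bar{x}):=\{x:\|Ax-b\|_2^2+\lambda\|x\|_{p,q}^q\le\lambda\|\bar{x}\|_{p,q}^q\}$, $$\|x^*-\bar{x}\|_2^2\le 2\lambda^{\frac{2}{2-q}}S^{\frac{q-2}{q}+(1-2^{-K})\frac{4}{q(2-q)}}\big/\phi_{p,q}^{\frac{4}{2-q}}(S,S).$$ Moreover, the exponent $e:=\frac{q-2}{q}+(1-2^{-K})\frac{4}{q(2-q)}$ satisfies $e=1$ if $2^{K-1}q=1$ and $e<\frac{3-q}{2-q}$ if $2^{K-1}q>1$; hence $\|x^*-\bar{x}\|_2^2=O(\lambda^{\frac{2}{2-q}}S)$ in the first case and $O(\lambda^{\frac{2}{2-q}}S^{\frac{3-q}{2-q}})$ in the second, with constant $2/\phi_{p,q}^{4/(2-q)}(S,S)$.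
   Context: Group structure: $\{1,\dots,n\}$ is partitioned into disjoint nonempty index sets $\mathcal{G}_1,\dots,\mathcal{G}_r$; $x_{\mathcal{G}_i}$ is the subvector indexed by $\mathcal{G}_i$. For $\mathcal{J}\subseteq\{1,\dots,r\}$, $\|x_{\mathcal{G}_{\mathcal{J}}}\|_{p,q}:=(\sum_{i\in\mathcal{J}}\|x_{\mathcal{G}_i}\|_p^q)^{1/q}$ and $\|x\|_{p,q}:=\|x_{\mathcal{G}_{\{1,\dots,r\}}}\|_{p,q}$. A group $i$ is nonzero if $x_{\mathcal{G}_i}\ne0$. For $\mathcal{J}\subseteq\{1,\dots,r\}$ and integer $N$, $\mathcal{J}(x;N)$ is the set of the $N$ indices $i\in\mathcal{J}^c$ with the largest $\|x_{\mathcal{G}_i}\|_p$ (ties broken arbitrarily). Group restricted eigenvalue: $\phi_{p,q}(S,N):=\inf\{\|Ax\|_2/\|x_{\mathcal{G}_{\mathcal{N}}}\|_{p,2}: x\ne0,\ |\mathcal{J}|\le S,\ \|x_{\mathcal{G}_{\mathcal{J}^c}}\|_{p,q}\le\|x_{\mathcal{G}_{\mathcal{J}}}\|_{p,q},\ \mathcal{N}=\mathcal{J}(x;N)\cup\mathcal{J}\}$; the $(p,q)$-GREC$(S,N)$ holds if $\phi_{p,q}(S,N)>0$. *)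

theory Defs
  imports "HOL-Analysis.Analysis"
begin

text \<open>Group structure: grp :: 'n \<Rightarrow> 'g assigns each coordinate its group;
  group i is G_i = {j. grp j = i}. Surjectivity of grp = all groups nonempty.\<close>

definition group_norm :: "('n::finite \<Rightarrow> 'g) \<Rightarrow> real \<Rightarrow> real^'n \<Rightarrow> 'g \<Rightarrow> real" where
  "group_norm grp p x i = (\<Sum>j\<in>{j. grp j = i}. \<bar>x $ j\<bar> powr p) powr (1 / p)"

definition gnorm_pq :: "('n::finite \<Rightarrow> 'g::finite) \<Rightarrow> real \<Rightarrow> real \<Rightarrow> real^'n \<Rightarrow> 'g set \<Rightarrow> real" where
  "gnorm_pq grp p q x J = (\<Sum>i\<in>J. group_norm grp p x i powr q) powr (1 / q)"

definition gnorm_pq_full :: "('n::finite \<Rightarrow> 'g::finite) \<Rightarrow> real \<Rightarrow> real \<Rightarrow> real^'n \<Rightarrow> real" where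
  "gnorm_pq_full grp p q x = gnorm_pq grp p q x UNIV"

definition nonzero_groups :: "('n::finite \<Rightarrow> 'g::finite) \<Rightarrow> real^'n \<Rightarrow> 'g set" where
  "nonzero_groups grp x = {i. \<exists>j. grp j = i \<and> x $ j \<noteq> 0}"

text \<open>T is an admissible choice of J(x;N): the N indices (or all, if fewer remain)
  in the complement of J with largest group norms, ties broken arbitrarily.\<close>
definition is_top_groups :: "('n::finite \<Rightarrow> 'g::finite) \<Rightarrow> real \<Rightarrow> real^'n \<Rightarrow> 'g set \<Rightarrow> nat \<Rightarrow> 'g set \<Rightarrow> bool" where
  "is_top_groups grp p x J N T \<longleftrightarrow>
     T \<subseteq> - J \<and> card T = min N (card (- J)) \<and>
     (\<forall>i\<in>T. \<forall>k\<in>(- J) - T. group_norm grp p x k \<le> group_norm grp p x i)"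

definition grec_phi :: "('n::finite \<Rightarrow> 'g::finite) \<Rightarrow> real \<Rightarrow> real \<Rightarrow> real^'n^'m \<Rightarrow> nat \<Rightarrow> nat \<Rightarrow> real" where
  "grec_phi grp p q A S N = Inf {norm (A *v x) / gnorm_pq grp p 2 x (T \<union> J) | x J T.
      x \<noteq> 0 \<and> card J \<le> S \<and> gnorm_pq grp p q x (- J) \<le> gnorm_pq grp p q x J \<and>
      is_top_groups grp p x J N T}"

definition GREC :: "('n::finite \<Rightarrow> 'g::finite) \<Rightarrow> real \<Rightarrow> real \<Rightarrow> real^'n^'m \<Rightarrow> nat \<Rightarrow> nat \<Rightarrow> bool" where
  "GREC grp p q A S N \<longleftrightarrow> grec_phi grp p q A S N > 0"

definition lev_F :: "('n::finite \<Rightarrow> 'g::finite) \<Rightarrow> real \<Rightarrow> real \<Rightarrow> real^'n^'m \<Rightarrow> real^'m \<Rightarrow> real \<Rightarrow> real^'n \<Rightarrow> (real^'n) set" where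
  "lev_F grp p q A b lam xbar = {x. (norm (A *v x - b))\<^sup>2 + lam * gnorm_pq_full grp p q x powr q
      \<le> lam * gnorm_pq_full grp p q xbar powr q}"

end

theory Submission imports Defs begin
lemma powr_cvx_pt:
  fixes u w t p :: real
  assumes "u \<ge> 0" "w \<ge> 0" "0 \<le> t" "t \<le> 1" "p \<ge> 1"
  shows "(t*u + (1-t)*w) powr p \<le> t * u powr p + (1-t) * w powr p"
proof (cases "u > 0 \<and> w > 0")
  case True
  have "convex_on {0<..} (\<lambda>x. x powr p)" using powr_convex assms by blast
  then have H: "\<forall>x\<in>{0<..}. \<forall>y\<in>{0<..}. \<forall>u\<ge>0. \<forall>v\<ge>0. u + v = 1 \<longrightarrow> (u *\<^sub>R x + v *\<^sub>R y) powr p \<le> u * x powr p + v * y powr p"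
    unfolding convex_on_def by blast
  show ?thesis using H[rule_format, of u w t "1-t"] True assms by simp
next
  case False
  have sub: "s powr p \<le> s" if "0 \<le> s" "s \<le> 1" for s :: real
    using powr_mono'[of 1 p s] that assms by simp
  show ?thesis
  proof (cases "u = 0")
    case True
    have "((1-t)*w) powr p = (1-t) powr p * w powr p"
      using assms by (simp add: powr_mult)
    also have "\<dots> \<le> (1-t) * w powr p" using sub[of "1-t"] assms
      by (intro mult_right_mono) auto
    finally show ?thesis using True assms by simp
  next
    case False
    then have "w = 0" using \<open>\<not>(u>0 \<and> w>0)\<close> assms by auto
    have "(t*u) powr p = t powr p * u powr p"
      using assms by (simp add: powr_mult)
    also have "\<dots> \<le> t * u powr p" using sub[of "t"] assms
      by (intro mult_right_mono) auto
    finally show ?thesis using \<open>w=0\<close> assms by simp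
  qed
qed

lemma minkowski_fin:
  fixes x y :: "'a \<Rightarrow> real" and p :: real
  assumes "finite G" "p \<ge> 1"
  shows "(\<Sum>j\<in>G. \<bar>x j + y j\<bar> powr p) powr (1/p)
     \<le> (\<Sum>j\<in>G. \<bar>x j\<bar> powr p) powr (1/p) + (\<Sum>j\<in>G. \<bar>y j\<bar> powr p) powr (1/p)"
proof -
  define a where "a = (\<Sum>j\<in>G. \<bar>x j\<bar> powr p) powr (1/p)"
  define b where "b = (\<Sum>j\<in>G. \<bar>y j\<bar> powr p) powr (1/p)"
  have p0: "p > 0" using assms by simp
  have a0: "a \<ge> 0" "b \<ge> 0" unfolding a_def b_def by auto
  have ap: "a powr p = (\<Sum>j\<in>G. \<bar>x j\<bar> powr p)" unfolding a_def
    using p0 by (simp add: powr_powr sum_nonneg)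
  have bp: "b powr p = (\<Sum>j\<in>G. \<bar>y j\<bar> powr p)" unfolding b_def
    using p0 by (simp add: powr_powr sum_nonneg)
  show ?thesis
  proof (cases "a = 0 \<or> b = 0")
    case True
    then show ?thesis
    proof
      assume "a = 0"
      then have "(\<Sum>j\<in>G. \<bar>x j\<bar> powr p) = 0" using ap p0 by simp
      then have "\<forall>j\<in>G. x j = 0" using assms(1) by (simp add: sum_nonneg_eq_0_iff)
      then show ?thesis using \<open>a = 0\<close> unfolding a_def b_def by simp
    next
      assume "b = 0"
      then have "(\<Sum>j\<in>G. \<bar>y j\<bar> powr p) = 0" using bp p0 by simp
      then have "\<forall>j\<in>G. y j = 0" using assms(1) by (simp add: sum_nonneg_eq_0_iff)
      then show ?thesis using \<open>b = 0\<close> unfolding a_def b_def by simp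
    qed
  next
    case False
    then have apos: "a > 0" "b > 0" using a0 by auto
    define t where "t = a / (a+b)"
    have t01: "0 \<le> t" "t \<le> 1" "1 - t = b/(a+b)" using apos unfolding t_def by (auto simp: field_simps)
    have pt: "\<bar>x j + y j\<bar> powr p \<le> (a+b) powr p * (t * (\<bar>x j\<bar> powr p / a powr p) + (1-t) * (\<bar>y j\<bar> powr p / b powr p))" for j
    proof -
      have ab: "a + b > 0" using apos by simp
      have eq: "(a+b) * (t * (\<bar>x j\<bar>/a) + (1-t) * (\<bar>y j\<bar>/b)) = \<bar>x j\<bar> + \<bar>y j\<bar>"
      proof -
        have e1: "(a+b) * (t * (\<bar>x j\<bar>/a)) = \<bar>x j\<bar>" unfolding t_def using apos ab by simp
        have e2: "(a+b) * ((1-t) * (\<bar>y j\<bar>/b)) = \<bar>y j\<bar>" unfolding t01(3) using apos ab by simp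
        show ?thesis by (simp only: distrib_left e1 e2)
      qed
      have "\<bar>x j + y j\<bar> \<le> (a+b) * (t * (\<bar>x j\<bar>/a) + (1-t) * (\<bar>y j\<bar>/b))"
        unfolding eq by (rule abs_triangle_ineq)
      then have "\<bar>x j + y j\<bar> powr p \<le> ((a+b) * (t * (\<bar>x j\<bar>/a) + (1-t) * (\<bar>y j\<bar>/b))) powr p"
        using p0 by (intro powr_mono2) auto
      also have "\<dots> = (a+b) powr p * (t * (\<bar>x j\<bar>/a) + (1-t) * (\<bar>y j\<bar>/b)) powr p"
        by (rule powr_mult)
      also have "\<dots> \<le> (a+b) powr p * (t * (\<bar>x j\<bar>/a) powr p + (1-t) * (\<bar>y j\<bar>/b) powr p)"
        using apos t01 assms by (intro mult_left_mono powr_cvx_pt) auto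
      also have "\<dots> = (a+b) powr p * (t * (\<bar>x j\<bar> powr p / a powr p) + (1-t) * (\<bar>y j\<bar> powr p / b powr p))"
        using apos by (simp add: powr_divide)
      finally show ?thesis .
    qed
    have "(\<Sum>j\<in>G. \<bar>x j + y j\<bar> powr p) \<le> (\<Sum>j\<in>G. (a+b) powr p * (t * (\<bar>x j\<bar> powr p / a powr p) + (1-t) * (\<bar>y j\<bar> powr p / b powr p)))"
      by (intro sum_mono pt)
    also have "\<dots> = (a+b) powr p * (t * ((\<Sum>j\<in>G. \<bar>x j\<bar> powr p) / a powr p) + (1-t) * ((\<Sum>j\<in>G. \<bar>y j\<bar> powr p) / b powr p))"
      by (simp add: sum_distrib_left sum_distrib_right sum.distrib sum_divide_distrib algebra_simps)
    also have "\<dots> = (a+b) powr p"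
      using apos by (simp add: ap[symmetric] bp[symmetric])
    finally have "(\<Sum>j\<in>G. \<bar>x j + y j\<bar> powr p) powr (1/p) \<le> ((a+b) powr p) powr (1/p)"
      using p0 by (intro powr_mono2) (auto intro: sum_nonneg)
    also have "\<dots> = a + b" using apos p0 by (simp add: powr_powr)
    finally show ?thesis unfolding a_def b_def .
  qed
qed

lemma powr_subadd:
  fixes a b q :: real
  assumes "a \<ge> 0" "b \<ge> 0" "0 < q" "q \<le> 1"
  shows "(a+b) powr q \<le> a powr q + b powr q"
proof (cases "a + b = 0")
  case True then show ?thesis using assms by simp
next
  case False
  define s where "s = a + b"
  have s: "s > 0" using False assms s_def by simp
  have sub: "c \<le> c powr q" if "0 \<le> c" "c \<le> 1" for c :: real
    using powr_mono'[of q 1 c] that assms by simp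
  have "a powr q = s powr q * (a/s) powr q" using s assms by (simp add: powr_divide)
  moreover have "b powr q = s powr q * (b/s) powr q" using s assms by (simp add: powr_divide)
  moreover have "(a/s) + (b/s) \<le> (a/s) powr q + (b/s) powr q"
    using sub[of "a/s"] sub[of "b/s"] s assms s_def by (auto simp: divide_le_eq_1)
  moreover have "a/s + b/s = 1" using s s_def by (simp add: add_divide_distrib[symmetric])
  ultimately have "s powr q * 1 \<le> a powr q + b powr q"
    by (metis distrib_left mult_left_mono powr_ge_zero)
  then show ?thesis using s_def by simp
qed

lemma power_mean_sum:
  fixes t :: "'a \<Rightarrow> real" and r :: real
  assumes "finite J" "\<And>i. i \<in> J \<Longrightarrow> t i \<ge> 0" "0 < r" "r \<le> 1"
  shows "(\<Sum>i\<in>J. t i powr r) \<le> real (card J) powr (1 - r) * (\<Sum>i\<in>J. t i) powr r"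
proof (cases "(\<Sum>i\<in>J. t i) = 0")
  case True
  then have "\<forall>i\<in>J. t i = 0" using assms by (simp add: sum_nonneg_eq_0_iff)
  then show ?thesis by simp
next
  case False
  have Jne: "J \<noteq> {}" using False by auto
  have cpos: "real (card J) > 0" using Jne assms(1) by (simp add: card_gt_0_iff)
  define M where "M = (\<Sum>i\<in>J. t i) / card J"
  have Mpos: "M > 0" unfolding M_def using False cpos assms
    by (metis divide_pos_pos less_eq_real_def sum_nonneg)
  have y: "t i powr r * M powr (1-r) \<le> r * t i + (1-r) * M" if "i \<in> J" for i
  proof (cases "t i = 0")
    case True then show ?thesis using Mpos assms by simp
  next
    case False then show ?thesis using Youngs_inequality_0[of r "1-r" "t i" M] assms that Mpos by force
  qed
  have "(\<Sum>i\<in>J. t i powr r) * M powr (1-r) = (\<Sum>i\<in>J. t i powr r * M powr (1-r))"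
    by (simp add: sum_distrib_right)
  also have "\<dots> \<le> (\<Sum>i\<in>J. r * t i + (1-r) * M)" by (intro sum_mono y)
  also have "\<dots> = r * (\<Sum>i\<in>J. t i) + (1-r) * card J * M"
    by (simp add: sum.distrib sum_distrib_left)
  also have "\<dots> = card J * M" unfolding M_def using cpos by (simp add: field_simps)
  finally have 1: "(\<Sum>i\<in>J. t i powr r) * M powr (1-r) \<le> card J * M" .
  have eq: "card J * M = (card J * M powr r) * M powr (1-r)" using Mpos
    by (simp add: mult.assoc powr_add[symmetric])
  have "(\<Sum>i\<in>J. t i powr r) \<le> card J * M powr r"
    using 1 unfolding eq by (rule mult_right_le_imp_le) (use Mpos in simp)
  also have "card J * M powr r = real (card J) powr (1 - r) * (\<Sum>i\<in>J. t i) powr r"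
  proof -
    have "M powr r = (\<Sum>i\<in>J. t i) powr r / real (card J) powr r"
      unfolding M_def by (rule powr_divide)
    moreover have "real (card J) powr (1 - r) = real (card J) / real (card J) powr r"
      using cpos by (simp add: powr_diff)
    ultimately show ?thesis by simp
  qed
  finally show ?thesis .
qed

lemma powr2_abs: "\<bar>y::real\<bar> powr 2 = y\<^sup>2"
  by (cases "y = 0") (simp_all add: powr_numeral)

lemma l2_le_lp:
  fixes v :: "'a \<Rightarrow> real"
  assumes "finite G" "1 \<le> p" "p \<le> 2"
  shows "(\<Sum>j\<in>G. (v j)\<^sup>2) \<le> ((\<Sum>j\<in>G. \<bar>v j\<bar> powr p) powr (1/p)) powr 2"
proof -
  define s where "s = (\<Sum>j\<in>G. \<bar>v j\<bar> powr p)"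
  have s0: "s \<ge> 0" unfolding s_def by (simp add: sum_nonneg)
  have le: "\<bar>v j\<bar> powr p \<le> s" if "j \<in> G" for j
    unfolding s_def using assms(1) that by (intro member_le_sum) auto
  have c: "2/p - 1 \<ge> 0" using assms by (simp add: field_simps)
  have pt: "(v j)\<^sup>2 \<le> \<bar>v j\<bar> powr p * s powr (2/p - 1)" if "j \<in> G" for j
  proof -
    have "(v j)\<^sup>2 = \<bar>v j\<bar> powr 2" by (simp add: powr2_abs)
    also have "\<dots> = (\<bar>v j\<bar> powr p) powr (1 + (2/p - 1))" using assms by (simp add: powr_powr)
    also have "\<dots> = (\<bar>v j\<bar> powr p) * (\<bar>v j\<bar> powr p) powr (2/p - 1)"
      using powr_add[of "\<bar>v j\<bar> powr p" 1 "2/p - 1"] by simp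
    also have "\<dots> \<le> (\<bar>v j\<bar> powr p) * s powr (2/p - 1)"
      using le[OF that] c by (intro mult_left_mono powr_mono2) auto
    finally show ?thesis .
  qed
  have "(\<Sum>j\<in>G. (v j)\<^sup>2) \<le> (\<Sum>j\<in>G. \<bar>v j\<bar> powr p * s powr (2/p - 1))"
    using pt by (intro sum_mono) auto
  also have "\<dots> = s * s powr (2/p - 1)" unfolding s_def by (simp add: sum_distrib_right)
  also have "\<dots> = s powr (1 + (2/p - 1))" using s0 powr_add[of s 1 "2/p - 1"] by simp
  also have "\<dots> = (s powr (1/p)) powr 2" using assms by (simp add: powr_powr)
  finally show ?thesis unfolding s_def .
qed

lemma top_exists:
  fixes f :: "'a \<Rightarrow> real"
  assumes "finite U"
  shows "\<exists>T\<subseteq>U. card T = min N (card U) \<and> (\<forall>i\<in>T. \<forall>k\<in>U - T. f k \<le> f i)"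
proof (induction N)
  case 0 then show ?case by (intro exI[of _ "{}"]) auto
next
  case (Suc N)
  then obtain T where T: "T \<subseteq> U" "card T = min N (card U)" "\<forall>i\<in>T. \<forall>k\<in>U - T. f k \<le> f i" by blast
  have fT: "finite T" using T(1) assms finite_subset by blast
  have cTU: "card T \<le> card U" using card_mono[OF assms T(1)] .
  show ?case
  proof (cases "card T < card U")
    case True
    then have ne: "U - T \<noteq> {}" using T(1) by auto
    have fin: "finite (f ` (U - T))" using assms by simp
    have "Max (f ` (U - T)) \<in> f ` (U - T)" using Max_in[OF fin] ne by simp
    then obtain k where k: "k \<in> U - T" "f k = Max (f ` (U - T))" by (metis imageE)
    have kmax: "f k' \<le> f k" if "k' \<in> U - T" for k'
      using k(2) fin that by simp
    have cN: "card T = N" using True T(2) by simp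
    have kT: "k \<notin> T" using k(1) by simp
    show ?thesis
    proof (intro exI[of _ "insert k T"] conjI ballI)
      show "insert k T \<subseteq> U" using k T by auto
      show "card (insert k T) = min (Suc N) (card U)" using kT fT cN True by simp
      fix i k' assume i: "i \<in> insert k T" and k': "k' \<in> U - insert k T"
      then have k'': "k' \<in> U - T" by simp
      show "f k' \<le> f i"
      proof (cases "i = k")
        case True then show ?thesis using kmax[OF k''] by simp
      next
        case False then have "i \<in> T" using i by simp
        then show ?thesis using T(3) k'' by blast
      qed
    qed
  next
    case False
    then have cE: "card T = card U" using cTU by linarith
    then have TU: "T = U" using T(1) assms card_subset_eq by blast
    have "card U \<le> N" using T(2) cE by simp
    then have m: "card T = min (Suc N) (card U)" using cE by simp
    show ?thesis
      by (rule exI[of _ T]) (use T(1) m TU in simp)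
  qed
qed
lemma gn_nonneg: "group_norm grp p x i \<ge> 0"
  unfolding group_norm_def by simp

lemma gnorm_pq_powr:
  assumes "q > 0"
  shows "gnorm_pq grp p q x J powr q = (\<Sum>i\<in>J. group_norm grp p x i powr q)"
  unfolding gnorm_pq_def using assms by (simp add: powr_powr sum_nonneg)

lemma gn_triangle:
  fixes xs h :: "real^'n::finite"
  assumes "p \<ge> 1"
  shows "group_norm grp p (xs - h) i \<le> group_norm grp p xs i + group_norm grp p h i"
proof -
  have "group_norm grp p (xs - h) i = (\<Sum>j\<in>{j. grp j = i}. \<bar>xs $ j + (- h $ j)\<bar> powr p) powr (1/p)"
    unfolding group_norm_def by simp
  also have "\<dots> \<le> (\<Sum>j\<in>{j. grp j = i}. \<bar>xs $ j\<bar> powr p) powr (1/p) + (\<Sum>j\<in>{j. grp j = i}. \<bar>- h $ j\<bar> powr p) powr (1/p)"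
    by (rule minkowski_fin) (use assms in auto)
  finally show ?thesis unfolding group_norm_def by simp
qed

lemma gn_zero_outside:
  fixes x :: "real^'n::finite"
  assumes "\<And>j. grp j = i \<Longrightarrow> x $ j = 0"
  shows "group_norm grp p x i = 0"
  unfolding group_norm_def using assms by simp

lemma gn_eq_outside:
  fixes x y :: "real^'n::finite"
  assumes "\<And>j. grp j = i \<Longrightarrow> x $ j = y $ j"
  shows "group_norm grp p x i = group_norm grp p y i"
  unfolding group_norm_def using assms by (intro arg_cong[where f="\<lambda>s. s powr (1/p)"] sum.cong) auto

lemma norm_sq_le_groups:
  fixes h :: "real^'n::finite" and grp :: "'n \<Rightarrow> 'g::finite"
  assumes "1 \<le> p" "p \<le> 2"
  shows "(norm h)\<^sup>2 \<le> (\<Sum>i\<in>UNIV. group_norm grp p h i powr 2)"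
proof -
  have "(norm h)\<^sup>2 = (\<Sum>j\<in>UNIV. (h $ j)\<^sup>2)"
    unfolding norm_vec_def L2_set_def by (simp add: sum_nonneg)
  also have "\<dots> = (\<Sum>i\<in>UNIV. \<Sum>j\<in>{j. j \<in> UNIV \<and> grp j = i}. (h $ j)\<^sup>2)"
    by (rule sum.group[symmetric]) auto
  also have "\<dots> \<le> (\<Sum>i\<in>UNIV. group_norm grp p h i powr 2)"
    unfolding group_norm_def
    apply (intro sum_mono)
    subgoal for i using l2_le_lp[OF finite[of "{j. grp j = i}"] assms, of "\<lambda>j. h $ j"] by simp
    done
  finally show ?thesis .
qed

lemma sum_UNIV_split:
  fixes f :: "'g::finite \<Rightarrow> real"
  shows "sum f UNIV = sum f X + sum f (- X)"
proof -
  have "sum f (X \<union> - X) = sum f X + sum f (- X)"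
    by (rule sum.union_disjoint) auto
  then show ?thesis by simp
qed
theorem theorem2p1:
  fixes grp :: "'n::finite \<Rightarrow> 'g::finite"
    and A :: "real^'n^'m::finite"
    and xbar xs :: "real^'n"
    and p q lam :: real and S :: nat and K :: int
  assumes groups: "surj grp"
    and q: "0 < q" "q \<le> 1" and p: "1 \<le> p" "p \<le> 2"
    and S: "card (nonzero_groups grp xbar) = S" "S \<ge> 1"
    and grec: "GREC grp p q A S S"
    and K: "2 powr (real_of_int K - 1) * q \<ge> 1"
           "\<forall>k::int. 2 powr (real_of_int k - 1) * q \<ge> 1 \<longrightarrow> K \<le> k"
    and lam_pos: "lam > 0"
    and xs: "xs \<in> lev_F grp p q A (A *v xbar) lam xbar"
  shows "let e = (q - 2) / q + (1 - 2 powr (- real_of_int K)) * 4 / (q * (2 - q));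
             \<phi> = grec_phi grp p q A S S;
             C = 2 / \<phi> powr (4 / (2 - q))
         in (norm (xs - xbar))\<^sup>2 \<le> 2 * lam powr (2 / (2 - q)) * real S powr e / \<phi> powr (4 / (2 - q))
          \<and> (2 powr (real_of_int K - 1) * q = 1 \<longrightarrow> e = 1 \<and>
               (norm (xs - xbar))\<^sup>2 \<le> C * lam powr (2 / (2 - q)) * real S)
          \<and> (2 powr (real_of_int K - 1) * q > 1 \<longrightarrow> e < (3 - q) / (2 - q) \<and>
               (norm (xs - xbar))\<^sup>2 \<le> C * lam powr (2 / (2 - q)) * real S powr ((3 - q) / (2 - q)))"
proof -
  define e where "e = (q - 2) / q + (1 - 2 powr (- real_of_int K)) * 4 / (q * (2 - q))"
  define \<phi> where "\<phi> = grec_phi grp p q A S S"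
  define D where "D = lam powr (2 / (2 - q)) * real S / \<phi> powr (4 / (2 - q))"
  have phipos: "\<phi> > 0" using grec unfolding GREC_def \<phi>_def by simp
  have Sr: "real S \<ge> 1" using S by simp
  define P where "P = 2 powr (real_of_int K)"
  have Ppos: "P > 0" unfolding P_def by simp
  have P1: "2 powr (real_of_int K - 1) = P / 2" unfolding P_def by (simp add: powr_diff)
  have P2: "2 powr (real_of_int (K - 1) - 1) = P / 4" unfolding P_def
    by (simp add: powr_diff)
  have Pw: "2 powr (- real_of_int K) = 1 / P" unfolding P_def by (simp add: powr_minus divide_inverse)
  have Kge: "P / 2 * q \<ge> 1" using K(1) P1 by simp
  have Klt: "P / 4 * q < 1"
  proof (rule ccontr)
    assume "\<not> P / 4 * q < 1"
    then have "P / 4 * q \<ge> 1" by simp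
    then have "2 powr (real_of_int (K - 1) - 1) * q \<ge> 1" unfolding P2 .
    then have "K \<le> K - 1" using K(2) by blast
    then show False by simp
  qed
  have q2: "2 - q > 0" using q by simp
  have eq_e: "e * (q * (2 - q)) = 4 * (1 - 1 / P) - (2 - q)^2"
    unfolding e_def Pw using q q2 by (simp add: field_simps power2_eq_square)
  have cpos: "q * (2 - q) > 0" using q q2 by simp
  have e_ge: "e \<ge> 1"
  proof -
    have "1 * (q * (2 - q)) \<le> e * (q * (2 - q))"
      unfolding eq_e using Kge Ppos q
      by (simp add: field_simps power2_eq_square; smt (verit) mult_pos_pos)
    then show ?thesis by (rule mult_right_le_imp_le[OF _ cpos])
  qed
  have e_eq: "e = 1" if "2 powr (real_of_int K - 1) * q = 1"
  proof -
    have "P * q = 2" using that P1 by simp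
    then have "e * (q * (2 - q)) = 1 * (q * (2 - q))"
      unfolding eq_e using Ppos by (simp add: field_simps power2_eq_square; smt (verit))
    then show ?thesis using cpos by (metis mult_right_cancel less_irrefl)
  qed
  have e_lt: "e < (3 - q) / (2 - q)"
  proof -
    have "P * q < 4" using Klt by simp
    then have "e * (q * (2 - q)) < ((3 - q) / (2 - q)) * (q * (2 - q))"
    proof -
      have r: "((3 - q)/(2-q)) * (q*(2-q)) = (3-q)*q" using q2 by simp
      have l: "4 * (1 - 1/P) - (2-q)^2 = 4*q - q*q - 4/P" by (simp add: power2_eq_square algebra_simps)
      have "4/P > q" using \<open>P * q < 4\<close> Ppos by (simp add: field_simps)
      then show ?thesis unfolding eq_e r l by (simp add: algebra_simps)
    qed
    then show ?thesis by (rule mult_right_less_imp_less) (use cpos in simp)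
  qed
  have ex3: "(3 - q) / (2 - q) \<ge> 1" using q2 by simp
  have main: "(norm (xs - xbar))\<^sup>2 \<le> 2 * D"
  proof -
    define h where "h = xs - xbar"
    define J where "J = nonzero_groups grp xbar"
    define a where "a = (\<lambda>i. group_norm grp p h i)"
    define B where "B = (\<Sum>i\<in>J. a i powr q)"
    have a0: "a i \<ge> 0" for i unfolding a_def by (rule gn_nonneg)
    have B0: "B \<ge> 0" unfolding B_def by (simp add: sum_nonneg)
    have cardJ: "card J = S" using S(1) unfolding J_def .
    have outside: "xbar $ j = 0" if "grp j \<notin> J" for j
      using that unfolding J_def nonzero_groups_def by auto
    have gbar0: "group_norm grp p xbar i = 0" if "i \<notin> J" for i
      by (rule gn_zero_outside) (use outside that in auto)
    have gxs: "group_norm grp p xs i = a i" if "i \<notin> J" for i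
      unfolding a_def h_def by (rule gn_eq_outside) (use outside that in auto)
    have tri: "group_norm grp p xbar i powr q \<le> group_norm grp p xs i powr q + a i powr q" for i
    proof -
      have "group_norm grp p xbar i = group_norm grp p (xs - h) i" unfolding h_def by simp
      also have "\<dots> \<le> group_norm grp p xs i + a i" unfolding a_def by (rule gn_triangle[OF p(1)])
      finally have "group_norm grp p xbar i powr q \<le> (group_norm grp p xs i + a i) powr q"
        using q by (intro powr_mono2) (auto simp: gn_nonneg)
      also have "\<dots> \<le> group_norm grp p xs i powr q + a i powr q"
        using q a0 by (intro powr_subadd) (auto simp: gn_nonneg)
      finally show ?thesis .
    qed
    have lev: "(norm (A *v h))\<^sup>2 + lam * (\<Sum>i\<in>UNIV. group_norm grp p xs i powr q)
        \<le> lam * (\<Sum>i\<in>UNIV. group_norm grp p xbar i powr q)"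
      using xs q unfolding lev_F_def gnorm_pq_full_def h_def
      by (simp add: gnorm_pq_powr matrix_vector_mult_diff_distrib)
    have sxs: "(\<Sum>i\<in>UNIV. group_norm grp p xs i powr q) = (\<Sum>i\<in>J. group_norm grp p xs i powr q) + (\<Sum>i\<in>-J. a i powr q)"
      using sum_UNIV_split[of "\<lambda>i. group_norm grp p xs i powr q" J] gxs by simp
    have sxbar: "(\<Sum>i\<in>UNIV. group_norm grp p xbar i powr q) \<le> (\<Sum>i\<in>J. group_norm grp p xs i powr q) + B"
    proof -
      have "(\<Sum>i\<in>UNIV. group_norm grp p xbar i powr q) = (\<Sum>i\<in>J. group_norm grp p xbar i powr q)"
        using sum_UNIV_split[of "\<lambda>i. group_norm grp p xbar i powr q" J] gbar0 q by simp
      also have "\<dots> \<le> (\<Sum>i\<in>J. group_norm grp p xs i powr q + a i powr q)"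
        by (intro sum_mono tri)
      finally show ?thesis unfolding B_def by (simp add: sum.distrib)
    qed
    define tq where "tq = (\<Sum>i\<in>-J. a i powr q)"
    have tq0: "tq \<ge> 0" unfolding tq_def by (simp add: sum_nonneg)
    have key: "(norm (A *v h))\<^sup>2 + lam * tq \<le> lam * B"
      using lev sxs sxbar lam_pos unfolding tq_def
      by (smt (verit, best) distrib_left mult_left_mono)
    have tqB: "tq \<le> B" using key lam_pos
      by (smt (verit) mult_le_cancel_left_pos zero_le_power2)
    have AhB: "(norm (A *v h))\<^sup>2 \<le> lam * B" using key lam_pos tq0
      by (smt (verit) mult_nonneg_nonneg)
    show ?thesis
    proof (cases "h = 0")
      case True
      have "D \<ge> 0" unfolding D_def by simp
      then show ?thesis using True unfolding h_def by simp
    next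
      case False
      have cone: "gnorm_pq grp p q h (- J) \<le> gnorm_pq grp p q h J"
        unfolding gnorm_pq_def using tqB q unfolding tq_def B_def a_def
        by (intro powr_mono2) (auto intro: sum_nonneg)
      obtain T where T: "T \<subseteq> - J" "card T = min S (card (- J))"
        "\<forall>i\<in>T. \<forall>k\<in>(- J) - T. a k \<le> a i"
        using top_exists[of "- J" S a] by auto
      have top: "is_top_groups grp p h J S T"
        unfolding is_top_groups_def using T unfolding a_def by auto
      define G where "G = (\<Sum>i\<in>T \<union> J. a i powr 2)"
      have G0: "G \<ge> 0" unfolding G_def by (simp add: sum_nonneg)
      have gG: "gnorm_pq grp p 2 h (T \<union> J) = sqrt G"
        unfolding gnorm_pq_def G_def a_def using G0 G_def a_def by (simp add: powr_half_sqrt)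
      have mem: "norm (A *v h) / gnorm_pq grp p 2 h (T \<union> J) \<in>
        {norm (A *v x) / gnorm_pq grp p 2 x (T \<union> J) | x J T.
          x \<noteq> 0 \<and> card J \<le> S \<and> gnorm_pq grp p q x (- J) \<le> gnorm_pq grp p q x J \<and>
          is_top_groups grp p x J S T}"
        using False cardJ cone top by blast
      have bdd: "bdd_below {norm (A *v x) / gnorm_pq grp p 2 x (T \<union> J) | x J T.
          x \<noteq> 0 \<and> card J \<le> S \<and> gnorm_pq grp p q x (- J) \<le> gnorm_pq grp p q x J \<and>
          is_top_groups grp p x J S T}"
        by (rule bdd_belowI[where m=0]) (auto simp: gnorm_pq_def)
      have phile: "\<phi> \<le> norm (A *v h) / sqrt G"
        unfolding \<phi>_def grec_phi_def using cInf_lower[OF mem bdd] gG by simp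
      have phiG: "\<phi> * sqrt G \<le> norm (A *v h)"
      proof (cases "G = 0")
        case True then show ?thesis by simp
      next
        case False
        then have "sqrt G > 0" using G0 by simp
        then show ?thesis using phile by (simp add: pos_le_divide_eq)
      qed
      have phiG2: "\<phi>\<^sup>2 * G \<le> (norm (A *v h))\<^sup>2"
      proof -
        have "(\<phi> * sqrt G)\<^sup>2 \<le> (norm (A *v h))\<^sup>2"
          using phiG phipos G0 by (intro power_mono) auto
        then show ?thesis using G0 by (simp add: power_mult_distrib)
      qed
      define GJ where "GJ = (\<Sum>i\<in>J. a i powr 2)"
      have GJ0: "GJ \<ge> 0" unfolding GJ_def by (simp add: sum_nonneg)
      have GJG: "GJ \<le> G" unfolding GJ_def G_def by (intro sum_mono2) auto
      have L3: "B \<le> real S powr (1 - q/2) * GJ powr (q/2)"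
      proof -
        have "(\<Sum>i\<in>J. (a i powr 2) powr (q/2)) \<le> real (card J) powr (1 - q/2) * (\<Sum>i\<in>J. a i powr 2) powr (q/2)"
          using q by (intro power_mean_sum) auto
        then show ?thesis unfolding B_def GJ_def cardJ by (simp add: powr_powr)
      qed
      have ineq: "\<phi>\<^sup>2 * G \<le> lam * (real S powr (1 - q/2) * G powr (q/2))"
      proof -
        have "GJ powr (q/2) \<le> G powr (q/2)" using GJ0 GJG q by (intro powr_mono2) auto
        then have "lam * B \<le> lam * (real S powr (1 - q/2) * G powr (q/2))"
          using L3 lam_pos by (smt (verit) mult_left_mono powr_ge_zero)
        then show ?thesis using phiG2 AhB by linarith
      qed
      have GD: "G \<le> D"
      proof (cases "G = 0")
        case True then show ?thesis unfolding D_def by simp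
      next
        case False
        then have Gpos: "G > 0" using G0 by simp
        have split: "G = G powr (1 - q/2) * G powr (q/2)"
          using Gpos by (simp add: powr_add[symmetric])
        have "(\<phi>\<^sup>2 * G powr (1 - q/2)) * G powr (q/2) \<le> (lam * real S powr (1 - q/2)) * G powr (q/2)"
          using ineq split by (simp add: mult.assoc)
        then have "\<phi>\<^sup>2 * G powr (1 - q/2) \<le> lam * real S powr (1 - q/2)"
          by (rule mult_right_le_imp_le) (use Gpos in simp)
        then have c1: "G powr (1 - q/2) \<le> lam * real S powr (1 - q/2) / \<phi>\<^sup>2"
          using phipos by (simp add: pos_le_divide_eq mult.commute)
        have ex: "(1 - q/2) * (2 / (2 - q)) = 1" using q2 by (simp add: field_simps)
        have "G = (G powr (1 - q/2)) powr (2 / (2 - q))"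
          unfolding powr_powr ex using Gpos by simp
        also have "\<dots> \<le> (lam * real S powr (1 - q/2) / \<phi>\<^sup>2) powr (2 / (2 - q))"
          using c1 q2 by (intro powr_mono2) auto
        also have "\<dots> = D"
        proof -
          have "\<phi>\<^sup>2 = \<phi> powr 2" using phipos by (simp add: powr_numeral)
          then have "(\<phi>\<^sup>2) powr (2 / (2 - q)) = \<phi> powr (4 / (2 - q))"
            by (simp add: powr_powr)
          moreover have "(real S powr (1 - q/2)) powr (2 / (2 - q)) = real S"
            unfolding powr_powr ex using Sr by simp
          ultimately show ?thesis unfolding D_def by (simp add: powr_divide powr_mult)
        qed
        finally show ?thesis .
      qed
      have tail: "(\<Sum>i\<in>-J - T. a i powr 2) \<le> GJ"
      proof (cases "card (- J) \<le> S")
        case True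
        then have "card T = card (- J)" using T(2) by simp
        then have "T = - J" using T(1) by (simp add: card_subset_eq)
        then show ?thesis using GJ0 by simp
      next
        case False
        then have cT: "card T = S" using T(2) by simp
        define \<beta> where "\<beta> = B / real S"
        have Spos: "real S > 0" using Sr by simp
        have \<beta>0: "\<beta> \<ge> 0" unfolding \<beta>_def using B0 Spos by simp
        have TJ: "(\<Sum>i\<in>T. a i powr q) \<le> tq"
          unfolding tq_def using T(1) by (intro sum_mono2) auto
        have ak: "a k powr q \<le> \<beta>" if k: "k \<in> - J - T" for k
        proof -
          have "real S * a k powr q = (\<Sum>i\<in>T. a k powr q)" using cT by simp
          also have "\<dots> \<le> (\<Sum>i\<in>T. a i powr q)"
            using T(3) k q a0 by (intro sum_mono powr_mono2) auto
          finally have "real S * a k powr q \<le> B" using TJ tqB by linarith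
          then show ?thesis unfolding \<beta>_def using Spos by (simp add: pos_le_divide_eq mult.commute)
        qed
        have ak2: "a k powr 2 \<le> a k powr q * \<beta> powr ((2 - q) / q)" if k: "k \<in> - J - T" for k
        proof -
          have "a k powr 2 = a k powr q * (a k powr q) powr ((2 - q) / q)"
            using q by (simp add: powr_powr powr_add[symmetric])
          also have "\<dots> \<le> a k powr q * \<beta> powr ((2 - q) / q)"
            using ak[OF k] q q2 by (intro mult_left_mono powr_mono2) auto
          finally show ?thesis .
        qed
        have "(\<Sum>i\<in>-J - T. a i powr 2) \<le> (\<Sum>i\<in>-J - T. a i powr q * \<beta> powr ((2 - q) / q))"
          using ak2 by (intro sum_mono) auto
        also have "\<dots> = (\<Sum>i\<in>-J - T. a i powr q) * \<beta> powr ((2 - q) / q)"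
          by (simp add: sum_distrib_right)
        also have "\<dots> \<le> B * \<beta> powr ((2 - q) / q)"
        proof -
          have "(\<Sum>i\<in>-J - T. a i powr q) \<le> tq" unfolding tq_def by (intro sum_mono2) auto
          then show ?thesis using tqB by (intro mult_right_mono) auto
        qed
        also have "\<dots> = \<beta> powr (2 / q) * real S"
        proof -
          have "\<beta> * \<beta> powr ((2 - q) / q) = \<beta> powr (2 / q)"
            using \<beta>0 q powr_add[of \<beta> 1 "(2 - q) / q"] by (simp add: add_divide_distrib[symmetric] field_simps)
          then show ?thesis unfolding \<beta>_def using Spos by (simp add: field_simps)
        qed
        also have "\<dots> \<le> GJ"
        proof -
          have "\<beta> \<le> real S powr (1 - q/2) * GJ powr (q/2) / real S"
            unfolding \<beta>_def using L3 Spos by (simp add: divide_right_mono)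
          also have "\<dots> = (GJ / real S) powr (q/2)"
          proof -
            have "real S powr (1 - q/2) = real S / real S powr (q/2)"
              using Spos by (simp add: powr_diff)
            then show ?thesis using Spos by (simp add: powr_divide)
          qed
          finally have "\<beta> powr (2/q) \<le> ((GJ / real S) powr (q/2)) powr (2/q)"
            using \<beta>0 q by (intro powr_mono2) auto
          also have "\<dots> = GJ / real S" using q GJ0 Spos by (simp add: powr_powr)
          finally show ?thesis using Spos by (simp add: pos_le_divide_eq)
        qed
        finally show ?thesis .
      qed
      have "(norm h)\<^sup>2 \<le> (\<Sum>i\<in>UNIV. a i powr 2)"
        unfolding a_def by (rule norm_sq_le_groups[OF p])
      also have "\<dots> = G + (\<Sum>i\<in>-J - T. a i powr 2)"
      proof -
        have "- (T \<union> J) = - J - T" by auto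
        then show ?thesis unfolding G_def using sum_UNIV_split[of "\<lambda>i. a i powr 2" "T \<union> J"] by simp
      qed
      also have "\<dots> \<le> 2 * D" using tail GJG GD by linarith
      finally show ?thesis unfolding h_def .
    qed
  qed
  have D0: "D \<ge> 0" unfolding D_def by simp
  have SeS: "real S \<le> real S powr e"
    using powr_mono[OF e_ge Sr] Sr by simp
  have S3S: "real S \<le> real S powr ((3 - q) / (2 - q))"
    using powr_mono[OF ex3 Sr] Sr by simp
  have b1: "(norm (xs - xbar))\<^sup>2 \<le> 2 * lam powr (2 / (2 - q)) * real S powr e / \<phi> powr (4 / (2 - q))"
  proof -
    have "2 * D \<le> 2 * lam powr (2 / (2 - q)) * real S powr e / \<phi> powr (4 / (2 - q))"
      unfolding D_def using SeS phipos
      by (simp add: divide_right_mono mult_left_mono)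
    then show ?thesis using main by linarith
  qed
  have b2: "(norm (xs - xbar))\<^sup>2 \<le> 2 / \<phi> powr (4 / (2 - q)) * lam powr (2 / (2 - q)) * real S"
    using main unfolding D_def by simp
  have b3: "(norm (xs - xbar))\<^sup>2 \<le> 2 / \<phi> powr (4 / (2 - q)) * lam powr (2 / (2 - q)) * real S powr ((3 - q) / (2 - q))"
  proof -
    have "2 * D \<le> 2 / \<phi> powr (4 / (2 - q)) * lam powr (2 / (2 - q)) * real S powr ((3 - q) / (2 - q))"
      unfolding D_def using S3S phipos
      by (simp add: divide_right_mono mult_left_mono)
    then show ?thesis using main by linarith
  qed
  show ?thesis
    unfolding Let_def e_def[symmetric] \<phi>_def[symmetric]
    using b1 b2 b3 e_eq e_lt by blast
qed
end
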